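(* Given a growth control function $g$, a strictly increasing sequence of integers $(p_j)_{j\in\mathbb{N}_0}$ with $p_0=0$ and $\sup_{j\in\mathbb{N}}p_{j+1}/p_j=+\infty$, and $\beta\ge0$, there exists a weight sequence $\boldsymbol{M}^\beta=(M^\beta_p)_p$ with quotients $m^\beta_p=M^\beta_{p+1}/M^\beta_p$ such that: (i) $m^\beta_p\le g(p)(1+p)^\beta$ for all $p\in\mathbb{N}_0$; (ii) $m^\beta_{p_j}=g(p_j)(1+p_j)^\beta$ for all $j\in\mathbb{N}_0$; (iii) $\gamma(\boldsymbol{M}^\beta)=\beta$.
   Context: A growth control function is a strictly increasing function $g\colon[0,\infty)\to[1,\infty)$ with $g(0)=1$ and $\lim_{t\to\infty}g(t)=\infty$. A weight sequence is a sequence $\boldsymbol{M}=(M_p)_{p\in\mathbb{N}_0}$ of positive reals with $M_0=1$, $M_p^2\le M_{p-1}M_{p+1}$ ($p\ge1$) and $m_p=M_{p+1}/M_p\to\infty$. A sequence $(c_p)$ is almost increasing if $c_p\le ac_q$ for all $q\ge p$, some $a>0$; $\gamma(\boldsymbol{M})=\sup\{\mu>0:(m_p/(p+1)^\mu)_p\text{ almost increasing}\}\in[0,\infty]$ (value $0$ for the empty set). *)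

theory Defs
  imports "HOL-Analysis.Analysis" "HOL-Library.Extended_Real"
begin

definition growth_control :: "(real \<Rightarrow> real) \<Rightarrow> bool" where
  "growth_control g \<longleftrightarrow> strict_mono_on {0..} g \<and> (\<forall>t\<ge>0. g t \<ge> 1) \<and> g 0 = 1
     \<and> filterlim g at_top at_top"

definition quot :: "(nat \<Rightarrow> real) \<Rightarrow> nat \<Rightarrow> real" where
  "quot M p = M (Suc p) / M p"

definition weight_sequence :: "(nat \<Rightarrow> real) \<Rightarrow> bool" where
  "weight_sequence M \<longleftrightarrow> (\<forall>p. M p > 0) \<and> M 0 = 1
     \<and> (\<forall>p\<ge>1. (M p)^2 \<le> M (p - 1) * M (Suc p))
     \<and> filterlim (quot M) at_top sequentially"

definition almost_increasing :: "(nat \<Rightarrow> real) \<Rightarrow> bool" where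
  "almost_increasing c \<longleftrightarrow> (\<exists>a>0. \<forall>p q. p \<le> q \<longrightarrow> c p \<le> a * c q)"

definition gamma_index :: "(nat \<Rightarrow> real) \<Rightarrow> ereal" where
  "gamma_index M = (let S = {\<mu>::real. \<mu> > 0 \<and>
        almost_increasing (\<lambda>p. quot M p / (real p + 1) powr \<mu>)}
      in if S = {} then 0 else (SUP \<mu>\<in>S. ereal \<mu>))"

end

theory Submission
  imports Defs
begin

theorem theorem4p10:
  fixes g :: "real \<Rightarrow> real" and pj :: "nat \<Rightarrow> nat" and \<beta> :: real
  assumes "growth_control g"
    and "strict_mono pj" and "pj 0 = 0"
    and "(SUP j\<in>{1..}. ereal (real (pj (Suc j)) / real (pj j))) = \<infinity>"
    and "\<beta> \<ge> 0"
  shows "\<exists>M. weight_sequence M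
     \<and> (\<forall>p. quot M p \<le> g (real p) * (1 + real p) powr \<beta>)
     \<and> (\<forall>j. quot M (pj j) = g (real (pj j)) * (1 + real (pj j)) powr \<beta>)
     \<and> gamma_index M = ereal \<beta>"
proof -
  note gc = assms(1)[unfolded growth_control_def]
  have gmono: "g x \<le> g y" if "0 \<le> x" "x \<le> y" for x y
    using strict_mono_on_leD[of "{0..}" g x y] gc that by auto
  have gpos: "g x > 0" if "0 \<le> x" for x using gc that by force
  have gnn: "0 \<le> g (real n)" for n using gpos[of "real n"] by simp
  have sub: "n \<le> pj n" for n using seq_suble[OF assms(2)] .
  have pjle: "pj i \<le> pj k \<longleftrightarrow> i \<le> k" for i k
    using assms(2) strict_mono_less_eq by blast
  define J where "J p = (GREATEST j. pj j \<le> p)" for p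
  have bnd: "\<And>y. pj y \<le> p \<Longrightarrow> y \<le> p" for p using sub le_trans by blast
  have J1: "pj (J p) \<le> p" for p
    unfolding J_def by (rule GreatestI_nat[of _ 0 p]) (use assms(3) bnd in auto)
  have J2: "j \<le> J p" if "pj j \<le> p" for j p
    unfolding J_def by (rule Greatest_le_nat[of _ j p]) (use that bnd in auto)
  have Jeq: "J p = j" if "pj j \<le> p" "p < pj (Suc j)" for p j
  proof -
    have "j \<le> J p" using J2 that by auto
    moreover have "\<not> Suc j \<le> J p"
      using J1[of p] that pjle[of "Suc j" "J p"] by auto
    ultimately show ?thesis by auto
  qed
  have Jmono: "J p \<le> J q" if "p \<le> q" for p q using J2 J1 that le_trans by blast
  have Jpj: "J (pj j) = j" for j
    using Jeq[of j "pj j"] assms(2) by (simp add: strict_mono_def)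
  define m where "m p = g (real (pj (J p))) * (1 + real p) powr \<beta>" for p
  have mpos: "m p > 0" for p unfolding m_def using gpos by simp
  have mmono: "m p \<le> m q" if "p \<le> q" for p q
    unfolding m_def
  proof (rule mult_mono)
    show "g (real (pj (J p))) \<le> g (real (pj (J q)))"
      using gmono Jmono[OF that] pjle by auto
    show "(1 + real p) powr \<beta> \<le> (1 + real q) powr \<beta>"
      using that assms(5) by (simp add: powr_mono2)
  qed (simp_all add: gnn)
  define M where "M p = (\<Prod>k<p. m k)" for p
  have Mpos: "M p > 0" for p unfolding M_def using mpos by (simp add: prod_pos)
  have qM: "quot M p = m p" for p
    unfolding quot_def using Mpos[of p] mpos by (simp add: M_def less_imp_neq[symmetric])
  have qM': "quot M = m" using qM by auto
  have ws: "weight_sequence M"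
    unfolding weight_sequence_def qM'
  proof (intro conjI allI impI)
    show "M p > 0" for p by (rule Mpos)
    show "M 0 = 1" by (simp add: M_def)
    show "(M p)^2 \<le> M (p - 1) * M (Suc p)" if p1: "1 \<le> p" for p
    proof -
      obtain k where k: "p = Suc k" using p1 by (cases p) auto
      have "(M p)^2 = M k * M k * m k * m k" by (simp add: k M_def power2_eq_square)
      also have "\<dots> \<le> M k * M k * m k * m (Suc k)"
        using mmono[of k "Suc k"] Mpos[of k] mpos[of k] by (simp add: mult_left_mono)
      also have "\<dots> = M (p - 1) * M (Suc p)" by (simp add: k M_def)
      finally show ?thesis .
    qed
    show "filterlim m at_top sequentially"
      unfolding filterlim_at_top
    proof
      fix C :: real
      have "eventually (\<lambda>t. C \<le> g t) at_top" using gc filterlim_at_top by blast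
      then obtain T where T: "\<And>t. t \<ge> T \<Longrightarrow> C \<le> g t" by (auto simp: eventually_at_top_linorder)
      define j where "j = nat \<lceil>T\<rceil>"
      have "T \<le> real (pj j)" using sub[of j] unfolding j_def by linarith
      hence C1: "C \<le> g (real (pj j))" using T by auto
      have "eventually (\<lambda>p. p \<ge> pj j) sequentially" by (rule eventually_ge_at_top)
      thus "eventually (\<lambda>p. C \<le> m p) sequentially"
      proof (rule eventually_mono)
        fix p assume "pj j \<le> p"
        hence "m (pj j) \<le> m p" by (rule mmono)
        moreover have "g (real (pj j)) \<le> m (pj j)"
          unfolding m_def Jpj using gpos[of "real (pj j)"] assms(5)
          by (simp add: mult_le_cancel_left1 ge_one_powr_ge_zero)
        ultimately show "C \<le> m p" using C1 by linarith
      qed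
    qed
  qed
  have i1: "quot M p \<le> g (real p) * (1 + real p) powr \<beta>" for p
    unfolding qM m_def
    by (rule mult_right_mono) (use gmono J1 in auto)
  have i2: "quot M (pj j) = g (real (pj j)) * (1 + real (pj j)) powr \<beta>" for j
    unfolding qM m_def Jpj ..
  define S where "S = {\<mu>::real. \<mu> > 0 \<and>
        almost_increasing (\<lambda>p. quot M p / (real p + 1) powr \<mu>)}"
  have S: "S = {0<..\<beta>}"
  proof (intro set_eqI iffI)
    fix \<mu> assume "\<mu> \<in> {0<..\<beta>}"
    hence mu: "0 < \<mu>" "\<mu> \<le> \<beta>" by auto
    have c: "quot M p / (real p + 1) powr \<mu> = g (real (pj (J p))) * (1 + real p) powr (\<beta> - \<mu>)" for p
      unfolding qM m_def by (simp add: powr_diff add.commute)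
    have "almost_increasing (\<lambda>p. quot M p / (real p + 1) powr \<mu>)"
      unfolding almost_increasing_def c
    proof (intro exI[of _ 1] conjI allI impI)
      fix p q :: nat assume pq: "p \<le> q"
      have "g (real (pj (J p))) * (1 + real p) powr (\<beta> - \<mu>) \<le> g (real (pj (J q))) * (1 + real q) powr (\<beta> - \<mu>)"
      proof (rule mult_mono)
        show "g (real (pj (J p))) \<le> g (real (pj (J q)))"
          using gmono Jmono[OF pq] pjle by auto
        show "(1 + real p) powr (\<beta> - \<mu>) \<le> (1 + real q) powr (\<beta> - \<mu>)"
          using pq mu by (simp add: powr_mono2)
      qed (simp_all add: gnn)
      thus "g (real (pj (J p))) * (1 + real p) powr (\<beta> - \<mu>) \<le> 1 * (g (real (pj (J q))) * (1 + real q) powr (\<beta> - \<mu>))" by simp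
    qed simp
    thus "\<mu> \<in> S" using mu by (simp add: S_def)
  next
    fix \<mu> assume "\<mu> \<in> S"
    then obtain a where mu: "\<mu> > 0" and a: "a > 0"
      and ai: "\<And>p q. p \<le> q \<Longrightarrow> quot M p / (real p + 1) powr \<mu> \<le> a * (quot M q / (real q + 1) powr \<mu>)"
      by (auto simp: S_def almost_increasing_def)
    show "\<mu> \<in> {0<..\<beta>}"
    proof (rule ccontr)
      assume "\<mu> \<notin> {0<..\<beta>}"
      hence mb: "\<beta> < \<mu>" using mu by auto
      define \<delta> where "\<delta> = \<mu> - \<beta>"
      have d: "\<delta> > 0" using mb by (simp add: \<delta>_def)
      define A where "A = a powr (1 / \<delta>)"
      have A: "A > 0" using a by (simp add: A_def)
      have "ereal (2 * A) < \<infinity>" by simp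
      then obtain j where j: "j \<ge> 1" "ereal (2 * A) < ereal (real (pj (Suc j)) / real (pj j))"
        using assms(4) SUP_eq_top_iff[THEN iffD1, OF assms(4)[unfolded top_ereal_def[symmetric]]]
        by (metis atLeast_iff top_ereal_def)
      hence R: "2 * A < real (pj (Suc j)) / real (pj j)" by simp
      have pj1: "pj j \<ge> 1" using sub[of j] j by simp
      define X where "X = 1 + real (pj j)"
      define Y where "Y = real (pj (Suc j))"
      have X: "X > 0" "X \<le> 2 * real (pj j)" using pj1 by (auto simp: X_def)
      have Y: "Y > 0" using pjle[of "Suc j" j] pj1 by (auto simp: Y_def)
      have "A < Y / X"
      proof -
        have "2 * A * real (pj j) < Y" using R pj1 by (simp add: Y_def field_simps)
        moreover have "A * X \<le> A * (2 * real (pj j))" using X A by (intro mult_left_mono) auto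
        ultimately have "A * X < Y" by simp
        thus ?thesis using X by (simp add: field_simps)
      qed
      hence "A powr \<delta> < (Y / X) powr \<delta>" using A d by (simp add: powr_less_mono2)
      moreover have "A powr \<delta> = a" using a d by (simp add: A_def powr_powr)
      ultimately have big: "a < (Y / X) powr \<delta>" by simp
      define q where "q = pj (Suc j) - 1"
      have q1: "pj j \<le> q" "q < pj (Suc j)"
        using pjle[of "Suc j" j] by (auto simp: q_def)
      have Jq: "J q = j" using Jeq q1 by auto
      have Yq: "real q + 1 = Y" using q1 by (simp add: q_def Y_def of_nat_diff)
      have Yq': "1 + real q = real (pj (Suc j))" using Yq by (simp add: Y_def add.commute)
      have "quot M (pj j) / (real (pj j) + 1) powr \<mu> \<le> a * (quot M q / (real q + 1) powr \<mu>)"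
        using ai q1 by auto
      hence "g (real (pj j)) * X powr \<beta> / X powr \<mu> \<le> a * (g (real (pj j)) * Y powr \<beta> / Y powr \<mu>)"
        unfolding qM m_def Jpj Jq Yq by (simp add: X_def Y_def add.commute Yq')
      hence "g (real (pj j)) * X powr (- \<delta>) \<le> a * (g (real (pj j)) * Y powr (- \<delta>))"
      proof -
        have ex: "Z powr \<beta> / Z powr \<mu> = Z powr (- \<delta>)" for Z :: real
          by (simp add: \<delta>_def powr_diff[symmetric])
        assume h: "g (real (pj j)) * X powr \<beta> / X powr \<mu> \<le> a * (g (real (pj j)) * Y powr \<beta> / Y powr \<mu>)"
        show ?thesis using h by (simp only: times_divide_eq_right[symmetric] ex)
      qed
      hence "X powr (- \<delta>) \<le> a * Y powr (- \<delta>)"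
        using gpos[of "real (pj j)"] by (simp add: mult.left_commute)
      hence "1 / X powr \<delta> \<le> a / Y powr \<delta>" by (simp add: powr_minus divide_inverse)
      hence "Y powr \<delta> / X powr \<delta> \<le> a" using X Y by (simp add: field_simps)
      hence "(Y / X) powr \<delta> \<le> a" using X Y by (simp add: powr_divide)
      thus False using big by simp
    qed
  qed
  have gam: "gamma_index M = ereal \<beta>"
  proof (cases "\<beta> = 0")
    case True
    hence "S = {}" using S by auto
    thus ?thesis using True unfolding gamma_index_def S_def[symmetric] Let_def by (simp add: zero_ereal_def)
  next
    case False
    hence bp: "\<beta> > 0" using assms(5) by simp
    have "(SUP \<mu>\<in>S. ereal \<mu>) = ereal \<beta>"
    proof (rule antisym)
      show "(SUP \<mu>\<in>S. ereal \<mu>) \<le> ereal \<beta>" by (rule SUP_least) (auto simp: S)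
      show "ereal \<beta> \<le> (SUP \<mu>\<in>S. ereal \<mu>)" by (rule SUP_upper2[of \<beta>]) (auto simp: S bp)
    qed
    moreover have "S \<noteq> {}" using S bp by auto
    ultimately show ?thesis unfolding gamma_index_def S_def[symmetric] Let_def by simp
  qed
  show ?thesis using ws i1 i2 gam by blast
qed

end
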